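(* Let $n\ge2$, $\omega\in\mathbb{R}^n$, $k\in\mathbb{R}_{>0}^n$ satisfy (IC1) $\sum_\mu\omega_\mu=0$, (IC2) $\omega\ne0$, (IC3) $\left|\frac{\omega_1}{k_1}\right|\le\cdots\le\left|\frac{\omega_n}{k_n}\right|$. Let $\sigma\in\{-1,+1\}^n$ and $f_\sigma(R)=-R+\frac1n\sum_{\mu=1}^n\sigma_\mu\sqrt{k_\mu^2R-\omega_\mu^2}$. Then $f_\sigma$ has no positive roots if and only if $f_\sigma(R)<0$ for all $R\in\left[\left(\frac{\omega_n}{k_n}\right)^2,\infty\right)$.
   Context: Square roots are nonnegative real square roots; a positive root of $f_\sigma$ is a real $R>0$ with $k_\mu^2R-\omega_\mu^2\ge0$ for all $\mu$ and $f_\sigma(R)=0$. *)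

theory Defs
  imports Complex_Main
begin

text \<open>Vectors in R^n are represented as functions nat => real indexed by {1..n}.\<close>

definition f_sigma :: "nat \<Rightarrow> (nat \<Rightarrow> real) \<Rightarrow> (nat \<Rightarrow> real) \<Rightarrow> (nat \<Rightarrow> real) \<Rightarrow> real \<Rightarrow> real" where
  "f_sigma n \<sigma> k \<omega> R = - R + (1 / real n) * (\<Sum>\<mu>=1..n. \<sigma> \<mu> * sqrt ((k \<mu>)\<^sup>2 * R - (\<omega> \<mu>)\<^sup>2))"

definition positive_root :: "nat \<Rightarrow> (nat \<Rightarrow> real) \<Rightarrow> (nat \<Rightarrow> real) \<Rightarrow> (nat \<Rightarrow> real) \<Rightarrow> real \<Rightarrow> bool" where
  "positive_root n \<sigma> k \<omega> R \<longleftrightarrow> R > 0 \<and> (\<forall>\<mu>\<in>{1..n}. (k \<mu>)\<^sup>2 * R - (\<omega> \<mu>)\<^sup>2 \<ge> 0) \<and> f_sigma n \<sigma> k \<omega> R = 0"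

end

theory Submission
  imports Defs
begin

theorem lemma1:
  fixes n :: nat and \<omega> k \<sigma> :: "nat \<Rightarrow> real"
  assumes n2: "n \<ge> 2"
    and kpos: "\<forall>\<mu>\<in>{1..n}. k \<mu> > 0"
    and IC1: "(\<Sum>\<mu>=1..n. \<omega> \<mu>) = 0"
    and IC2: "\<exists>\<mu>\<in>{1..n}. \<omega> \<mu> \<noteq> 0"
    and IC3: "\<forall>i\<in>{1..n}. \<forall>j\<in>{1..n}. i \<le> j \<longrightarrow> \<bar>\<omega> i / k i\<bar> \<le> \<bar>\<omega> j / k j\<bar>"
    and sig: "\<forall>\<mu>\<in>{1..n}. \<sigma> \<mu> \<in> {-1, 1}"
  shows "(\<not> (\<exists>R. positive_root n \<sigma> k \<omega> R)) \<longleftrightarrow>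
         (\<forall>R. R \<ge> (\<omega> n / k n)\<^sup>2 \<longrightarrow> f_sigma n \<sigma> k \<omega> R < 0)"
proof -
  define m where "m = (\<omega> n / k n)\<^sup>2"
  have nin: "n \<in> {1..n}" using n2 by auto
  have knp: "k n > 0" using kpos nin by auto
  have mpos: "m > 0"
  proof -
    obtain \<mu> where mu: "\<mu> \<in> {1..n}" "\<omega> \<mu> \<noteq> 0" using IC2 by auto
    have "k \<mu> > 0" using kpos mu by auto
    hence "\<bar>\<omega> \<mu> / k \<mu>\<bar> > 0" using mu by auto
    moreover have "\<bar>\<omega> \<mu> / k \<mu>\<bar> \<le> \<bar>\<omega> n / k n\<bar>" using IC3 mu nin by auto
    ultimately have "\<bar>\<omega> n / k n\<bar> > 0" by linarith
    thus ?thesis unfolding m_def by (metis abs_zero less_irrefl zero_less_power2)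
  qed
  have args: "(k \<mu>)\<^sup>2 * x - (\<omega> \<mu>)\<^sup>2 \<ge> 0" if "\<mu> \<in> {1..n}" "x \<ge> m" for \<mu> x
  proof -
    have kp: "k \<mu> > 0" using kpos that by auto
    have "\<bar>\<omega> \<mu> / k \<mu>\<bar> \<le> \<bar>\<omega> n / k n\<bar>" using IC3 that nin by auto
    hence "(\<omega> \<mu> / k \<mu>)\<^sup>2 \<le> (\<omega> n / k n)\<^sup>2"
      by (metis abs_ge_zero power2_abs power_mono)
    hence "(\<omega> \<mu> / k \<mu>)\<^sup>2 \<le> x" using that m_def by linarith
    hence "(\<omega> \<mu>)\<^sup>2 / (k \<mu>)\<^sup>2 \<le> x" by (simp add: power_divide)
    hence "(\<omega> \<mu>)\<^sup>2 \<le> x * (k \<mu>)\<^sup>2" using kp by (simp add: pos_divide_le_eq)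
    thus ?thesis by (simp add: algebra_simps)
  qed
  have pr_iff: "positive_root n \<sigma> k \<omega> R \<longleftrightarrow> R \<ge> m \<and> f_sigma n \<sigma> k \<omega> R = 0" for R
  proof
    assume h: "positive_root n \<sigma> k \<omega> R"
    hence "(k n)\<^sup>2 * R - (\<omega> n)\<^sup>2 \<ge> 0" using nin unfolding positive_root_def by auto
    hence "(\<omega> n)\<^sup>2 / (k n)\<^sup>2 \<le> R" using knp by (simp add: pos_divide_le_eq algebra_simps)
    hence "R \<ge> m" unfolding m_def by (simp add: power_divide)
    thus "R \<ge> m \<and> f_sigma n \<sigma> k \<omega> R = 0" using h unfolding positive_root_def by auto
  next
    assume "R \<ge> m \<and> f_sigma n \<sigma> k \<omega> R = 0"
    thus "positive_root n \<sigma> k \<omega> R" unfolding positive_root_def using args mpos by auto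
  qed
  define S where "S = (\<Sum>\<mu>=1..n. k \<mu>)"
  have bound: "f_sigma n \<sigma> k \<omega> R \<le> - R + (1 / real n) * (sqrt R * S)" if "R \<ge> m" for R
  proof -
    have "\<sigma> \<mu> * sqrt ((k \<mu>)\<^sup>2 * R - (\<omega> \<mu>)\<^sup>2) \<le> sqrt R * k \<mu>" if "\<mu> \<in> {1..n}" for \<mu>
    proof -
      have kp: "k \<mu> > 0" using kpos that by auto
      have a0: "(k \<mu>)\<^sup>2 * R - (\<omega> \<mu>)\<^sup>2 \<ge> 0" using args that \<open>R \<ge> m\<close> by auto
      have "\<sigma> \<mu> * sqrt ((k \<mu>)\<^sup>2 * R - (\<omega> \<mu>)\<^sup>2) \<le> sqrt ((k \<mu>)\<^sup>2 * R - (\<omega> \<mu>)\<^sup>2)"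
      proof -
        have "\<sigma> \<mu> = -1 \<or> \<sigma> \<mu> = 1" using sig that by auto
        moreover have "sqrt ((k \<mu>)\<^sup>2 * R - (\<omega> \<mu>)\<^sup>2) \<ge> 0" using a0 by simp
        ultimately show ?thesis by auto
      qed
      also have "\<dots> \<le> sqrt ((k \<mu>)\<^sup>2 * R)" by simp
      also have "\<dots> = sqrt R * k \<mu>" using kp by (simp add: real_sqrt_mult)
      finally show ?thesis .
    qed
    hence "(\<Sum>\<mu>=1..n. \<sigma> \<mu> * sqrt ((k \<mu>)\<^sup>2 * R - (\<omega> \<mu>)\<^sup>2)) \<le> (\<Sum>\<mu>=1..n. sqrt R * k \<mu>)"
      by (rule sum_mono)
    also have "\<dots> = sqrt R * S" unfolding S_def by (simp add: sum_distrib_left)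
    finally show ?thesis unfolding f_sigma_def using n2 by (simp add: divide_right_mono)
  qed
  show ?thesis
  proof
    assume nr: "\<not> (\<exists>R. positive_root n \<sigma> k \<omega> R)"
    show "\<forall>R. R \<ge> (\<omega> n / k n)\<^sup>2 \<longrightarrow> f_sigma n \<sigma> k \<omega> R < 0"
    proof (intro allI impI, rule ccontr)
      fix R0 assume R0: "R0 \<ge> (\<omega> n / k n)\<^sup>2" and ng: "\<not> f_sigma n \<sigma> k \<omega> R0 < 0"
      have R0m: "R0 \<ge> m" using R0 m_def by simp
      define R1 where "R1 = R0 + (S / real n)\<^sup>2 + 1"
      have R1ge: "R0 \<le> R1" unfolding R1_def by simp
      have R1pos: "R1 > 0" using R0m mpos R1ge by linarith
      have "(S / real n)\<^sup>2 < R1" unfolding R1_def using R0m mpos by linarith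
      hence "sqrt ((S / real n)\<^sup>2) < sqrt R1" by (rule real_sqrt_less_mono)
      hence "\<bar>S / real n\<bar> < sqrt R1" by simp
      hence "S / real n < sqrt R1" by linarith
      hence "S / real n * sqrt R1 < sqrt R1 * sqrt R1" using R1pos by (intro mult_strict_right_mono) auto
      moreover have "sqrt R1 * sqrt R1 = R1" using R1pos by simp
      ultimately have "(1 / real n) * (sqrt R1 * S) < R1" by (simp add: algebra_simps)
      hence f1: "f_sigma n \<sigma> k \<omega> R1 < 0" using bound[of R1] R1ge R0m by linarith
      have cont: "continuous_on {R0..R1} (f_sigma n \<sigma> k \<omega>)"
        unfolding f_sigma_def by (intro continuous_intros)
      obtain x where "R0 \<le> x" "x \<le> R1" "f_sigma n \<sigma> k \<omega> x = 0"
        using IVT2'[of "f_sigma n \<sigma> k \<omega>" R1 0 R0] f1 ng R1ge cont by auto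
      hence "positive_root n \<sigma> k \<omega> x" using pr_iff R0m by auto
      thus False using nr by blast
    qed
  next
    assume "\<forall>R. R \<ge> (\<omega> n / k n)\<^sup>2 \<longrightarrow> f_sigma n \<sigma> k \<omega> R < 0"
    thus "\<not> (\<exists>R. positive_root n \<sigma> k \<omega> R)" using pr_iff m_def by force
  qed
qed

end
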